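(* Let $A$ be a commutative noetherian local ring, let $x,y\in A$ be an exact pair of zero divisors, and let $a\in A$. (a) If $a$ is weakly regular on $A/(y)$, then $G_a$ is isomorphic to the ideal $(y,a)$ of $A$. (b) If $a$ is weakly regular on $A/(x)$, then $H_a$ is isomorphic to the ideal $(x,a)$ of $A$.
   Context: Two non-units $x,y\in A$ form an exact pair of zero divisors if $\operatorname{Ann}_A(x)=(y)$ and $\operatorname{Ann}_A(y)=(x)$. An element $a\in A$ is weakly regular on a module $M$ if multiplication by $a$ on $M$ is injective. For $a\in A$, let $\gamma_a=\begin{pmatrix} x & a\\ 0 & y\end{pmatrix}$ and $\eta_a=\begin{pmatrix} y & -a\\ 0 & x\end{pmatrix}$, viewed as $A$-linear maps $A^2\to A^2$ acting on column vectors, and set $G_a=\operatorname{Coker}\gamma_a$, $H_a=\operatorname{Coker}\eta_a$. *)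

theory Defs
  imports Main
begin

text \<open>Ideals of a commutative ring (type class idiom; A is the whole type).\<close>
definition is_ideal :: "'a::comm_ring_1 set \<Rightarrow> bool" where
  "is_ideal I \<longleftrightarrow> 0 \<in> I \<and> (\<forall>u\<in>I. \<forall>v\<in>I. u + v \<in> I) \<and> (\<forall>r. \<forall>u\<in>I. r * u \<in> I)"

definition ideal_gen :: "'a::comm_ring_1 set \<Rightarrow> 'a set" where
  "ideal_gen S = {t. \<exists>F c. finite F \<and> F \<subseteq> S \<and> t = (\<Sum>f\<in>F. c f * f)}"

definition finitely_generated_ideal :: "'a::comm_ring_1 set \<Rightarrow> bool" where
  "finitely_generated_ideal I \<longleftrightarrow> (\<exists>F. finite F \<and> I = ideal_gen F)"

definition noetherian_ring :: "'a::comm_ring_1 itself \<Rightarrow> bool" where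
  "noetherian_ring _ \<longleftrightarrow> (\<forall>I::'a set. is_ideal I \<longrightarrow> finitely_generated_ideal I)"

definition maximal_ideal :: "'a::comm_ring_1 set \<Rightarrow> bool" where
  "maximal_ideal M \<longleftrightarrow> is_ideal M \<and> M \<noteq> UNIV \<and>
     (\<forall>J. is_ideal J \<and> M \<subseteq> J \<longrightarrow> J = M \<or> J = UNIV)"

definition local_ring :: "'a::comm_ring_1 itself \<Rightarrow> bool" where
  "local_ring _ \<longleftrightarrow> (\<exists>!M::'a set. maximal_ideal M)"

definition is_unit :: "'a::comm_ring_1 \<Rightarrow> bool" where
  "is_unit u \<longleftrightarrow> u dvd 1"

definition Ann :: "'a::comm_ring_1 \<Rightarrow> 'a set" where
  "Ann u = {r. r * u = 0}"

definition pideal :: "'a::comm_ring_1 \<Rightarrow> 'a set" where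
  "pideal u = ideal_gen {u}"

definition exact_pair :: "'a::comm_ring_1 \<Rightarrow> 'a \<Rightarrow> bool" where
  "exact_pair x y \<longleftrightarrow> \<not> is_unit x \<and> \<not> is_unit y \<and> Ann x = pideal y \<and> Ann y = pideal x"

definition weakly_regular_quot :: "'a::comm_ring_1 \<Rightarrow> 'a set \<Rightarrow> bool" where
  "weakly_regular_quot a I \<longleftrightarrow> (\<forall>r. a * r \<in> I \<longrightarrow> r \<in> I)"

definition gamma_map :: "'a::comm_ring_1 \<Rightarrow> 'a \<Rightarrow> 'a \<Rightarrow> 'a \<times> 'a \<Rightarrow> 'a \<times> 'a" where
  "gamma_map x y a = (\<lambda>(u, v). (x * u + a * v, y * v))"

definition eta_map :: "'a::comm_ring_1 \<Rightarrow> 'a \<Rightarrow> 'a \<Rightarrow> 'a \<times> 'a \<Rightarrow> 'a \<times> 'a" where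
  "eta_map x y a = (\<lambda>(u, v). (y * u - a * v, x * v))"

definition coker_class :: "('a::comm_ring_1 \<times> 'a \<Rightarrow> 'a \<times> 'a) \<Rightarrow> 'a \<times> 'a \<Rightarrow> ('a \<times> 'a) set" where
  "coker_class f w = {w'. (fst w' - fst w, snd w' - snd w) \<in> range f}"

definition coker :: "('a::comm_ring_1 \<times> 'a \<Rightarrow> 'a \<times> 'a) \<Rightarrow> ('a \<times> 'a) set set" where
  "coker f = range (coker_class f)"

definition coker_iso_ideal :: "('a::comm_ring_1 \<times> 'a \<Rightarrow> 'a \<times> 'a) \<Rightarrow> 'a set \<Rightarrow> bool" where
  "coker_iso_ideal f I \<longleftrightarrow> (\<exists>\<phi>. bij_betw \<phi> (coker f) I \<and>
      (\<forall>w w'. \<phi> (coker_class f (fst w + fst w', snd w + snd w')) = \<phi> (coker_class f w) + \<phi> (coker_class f w')) \<and>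
      (\<forall>r w. \<phi> (coker_class f (r * fst w, r * snd w)) = r * \<phi> (coker_class f w)))"

end

theory Submission
  imports Defs
begin

lemma ideal_gen_single: "ideal_gen {u::'a::comm_ring_1} = {t. \<exists>c. t = c * u}"
proof (intro set_eqI iffI)
  fix t assume "t \<in> ideal_gen {u}"
  then obtain F c where F: "finite F" "F \<subseteq> {u}" "t = (\<Sum>f\<in>F. c f * f)"
    unfolding ideal_gen_def by blast
  from F(2) have "F = {} \<or> F = {u}" by blast
  then show "t \<in> {t. \<exists>c. t = c * u}"
  proof
    assume "F = {}" then show ?thesis using F by (auto intro: exI[of _ 0])
  next
    assume "F = {u}" then show ?thesis using F by auto
  qed
next
  fix t assume "t \<in> {t. \<exists>c. t = c * u}"
  then obtain c where "t = c * u" by blast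
  then show "t \<in> ideal_gen {u}" unfolding ideal_gen_def
    by (intro CollectI exI[of _ "{u}"] exI[of _ "\<lambda>_. c"]) auto
qed

lemma ideal_gen_two: "ideal_gen {u::'a::comm_ring_1, v} = {t. \<exists>c d. t = c * u + d * v}"
proof (intro set_eqI iffI)
  fix t assume "t \<in> ideal_gen {u, v}"
  then obtain F c where F: "finite F" "F \<subseteq> {u, v}" "t = (\<Sum>f\<in>F. c f * f)"
    unfolding ideal_gen_def by blast
  let ?G = "t \<in> {t. \<exists>c d. t = c * u + d * v}"
  from F(2) have "F = {} \<or> F = {u} \<or> F = {v} \<or> F = {u, v}" by blast
  moreover have "F = {} \<Longrightarrow> ?G" using F by (auto intro!: exI[of _ 0])
  moreover have "F = {u} \<Longrightarrow> ?G"
  proof -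
    assume "F = {u}" then have "t = c u * u + 0 * v" using F by simp
    then show ?G by blast
  qed
  moreover have "F = {v} \<Longrightarrow> ?G"
  proof -
    assume "F = {v}" then have "t = 0 * u + c v * v" using F by simp
    then show ?G by blast
  qed
  moreover have "F = {u, v} \<Longrightarrow> ?G"
  proof (cases "u = v")
    case True
    assume "F = {u, v}" then have "t = c u * u + 0 * v" using F True by simp
    then show ?G by blast
  next
    case False
    assume "F = {u, v}" then show ?G using F False by auto
  qed
  ultimately show ?G by blast
next
  fix t assume "t \<in> {t. \<exists>c d. t = c * u + d * v}"
  then obtain c d where t: "t = c * u + d * v" by blast
  show "t \<in> ideal_gen {u, v}"
  proof (cases "u = v")
    case True
    then show ?thesis unfolding ideal_gen_def using t
      by (intro CollectI exI[of _ "{u}"] exI[of _ "\<lambda>_. c + d"]) (auto simp: algebra_simps)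
  next
    case False
    then show ?thesis unfolding ideal_gen_def using t
      by (intro CollectI exI[of _ "{u, v}"] exI[of _ "\<lambda>f. if f = u then c else d"]) auto
  qed
qed

lemma coker_lemma:
  fixes f :: "'a::comm_ring_1 \<times> 'a \<Rightarrow> 'a \<times> 'a"
  assumes ker: "\<And>p q. \<alpha> * p + \<beta> * q = 0 \<longleftrightarrow> (p, q) \<in> range f"
    and I: "I = {t. \<exists>p q. t = \<alpha> * p + \<beta> * q}"
  shows "coker_iso_ideal f I"
proof -
  define \<psi> where "\<psi> = (\<lambda>w. \<alpha> * fst w + \<beta> * snd w)"
  have cls: "coker_class f w = {w'. \<psi> w' = \<psi> w}" for w
  proof -
    have "(fst w' - fst w, snd w' - snd w) \<in> range f \<longleftrightarrow> \<psi> w' = \<psi> w" for w'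
      unfolding ker[symmetric] \<psi>_def by (simp add: algebra_simps)
    then show ?thesis unfolding coker_class_def by blast
  qed
  define \<phi> where "\<phi> = (\<lambda>C. \<psi> (SOME w. w \<in> C))"
  have phi: "\<phi> (coker_class f w) = \<psi> w" for w
  proof -
    have "w \<in> coker_class f w" using cls by simp
    then have "(SOME w'. w' \<in> coker_class f w) \<in> coker_class f w" by (rule someI)
    then show ?thesis unfolding \<phi>_def using cls by simp
  qed
  have "bij_betw \<phi> (coker f) I"
    unfolding bij_betw_def
  proof
    show "inj_on \<phi> (coker f)"
      unfolding coker_def
    proof (rule inj_onI)
      fix C1 C2 assume "C1 \<in> range (coker_class f)" "C2 \<in> range (coker_class f)" "\<phi> C1 = \<phi> C2"
      then obtain w1 w2 where "C1 = coker_class f w1" "C2 = coker_class f w2" "\<psi> w1 = \<psi> w2"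
        using phi by auto
      then show "C1 = C2" using cls by simp
    qed
    show "\<phi> ` coker f = I"
      unfolding coker_def I image_image phi \<psi>_def by (auto intro!: rev_image_eqI[where x="(p,q)" for p q])
  qed
  moreover have "\<forall>w w'. \<phi> (coker_class f (fst w + fst w', snd w + snd w')) = \<phi> (coker_class f w) + \<phi> (coker_class f w')"
    by (simp add: phi \<psi>_def algebra_simps)
  moreover have "\<forall>r w. \<phi> (coker_class f (r * fst w, r * snd w)) = r * \<phi> (coker_class f w)"
    by (simp add: phi \<psi>_def algebra_simps)
  ultimately show ?thesis unfolding coker_iso_ideal_def by blast
qed

theorem proposition3p8:
  fixes x y a :: "'a::comm_ring_1"
  assumes "noetherian_ring TYPE('a)"
    and "local_ring TYPE('a)"
    and "exact_pair x y"
  shows "(weakly_regular_quot a (pideal y) \<longrightarrow> coker_iso_ideal (gamma_map x y a) (ideal_gen {y, a}))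
       \<and> (weakly_regular_quot a (pideal x) \<longrightarrow> coker_iso_ideal (eta_map x y a) (ideal_gen {x, a}))"
proof -
  have Ax: "\<And>r. r * x = 0 \<longleftrightarrow> (\<exists>c. r = c * y)" and Ay: "\<And>r. r * y = 0 \<longleftrightarrow> (\<exists>c. r = c * x)"
    using assms(3) unfolding exact_pair_def Ann_def pideal_def ideal_gen_single by (auto simp: set_eq_iff)
  have xy: "x * y = 0" using Ax[of y] by (metis mult_1 mult.commute)
  show ?thesis
  proof (intro conjI impI)
    assume wr: "weakly_regular_quot a (pideal y)"
    have wr': "\<And>r c. a * r = c * y \<Longrightarrow> \<exists>d. r = d * y"
      using wr unfolding weakly_regular_quot_def pideal_def ideal_gen_single by blast
    show "coker_iso_ideal (gamma_map x y a) (ideal_gen {y, a})"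
    proof (rule coker_lemma[where \<alpha> = y and \<beta> = "- a"])
      fix p q
      show "y * p + - a * q = 0 \<longleftrightarrow> (p, q) \<in> range (gamma_map x y a)"
      proof
        assume h: "y * p + - a * q = 0"
        then have "a * q = p * y" by (simp add: algebra_simps)
        then obtain v where v: "q = v * y" using wr' by blast
        have "(p - a * v) * y = 0" using h v by (simp add: algebra_simps)
        then obtain u where u: "p - a * v = u * x" using Ay by blast
        have "(p, q) = gamma_map x y a (u, v)"
          unfolding gamma_map_def using u v by (simp add: algebra_simps)
        then show "(p, q) \<in> range (gamma_map x y a)" by blast
      next
        assume "(p, q) \<in> range (gamma_map x y a)"
        then obtain u v where "(p, q) = gamma_map x y a (u, v)" by auto
        then have "p = x * u + a * v" "q = y * v" unfolding gamma_map_def by auto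
        then show "y * p + - a * q = 0" using xy by (simp add: algebra_simps)
      qed
    next
      show "ideal_gen {y, a} = {t. \<exists>p q. t = y * p + - a * q}"
        unfolding ideal_gen_two
      proof (intro set_eqI iffI)
        fix t assume "t \<in> {t. \<exists>c d. t = c * y + d * a}"
        then obtain c d where "t = c * y + d * a" by blast
        then have "t = y * c + - a * (- d)" by (simp add: algebra_simps)
        then show "t \<in> {t. \<exists>p q. t = y * p + - a * q}" by blast
      next
        fix t assume "t \<in> {t. \<exists>p q. t = y * p + - a * q}"
        then obtain p q where "t = y * p + - a * q" by blast
        then have "t = p * y + (- q) * a" by (simp add: algebra_simps)
        then show "t \<in> {t. \<exists>c d. t = c * y + d * a}" by blast
      qed
    qed
  next
    assume wr: "weakly_regular_quot a (pideal x)"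
    have wr': "\<And>r c. a * r = c * x \<Longrightarrow> \<exists>d. r = d * x"
      using wr unfolding weakly_regular_quot_def pideal_def ideal_gen_single by blast
    show "coker_iso_ideal (eta_map x y a) (ideal_gen {x, a})"
    proof (rule coker_lemma[where \<alpha> = x and \<beta> = a])
      fix p q
      show "x * p + a * q = 0 \<longleftrightarrow> (p, q) \<in> range (eta_map x y a)"
      proof
        assume h: "x * p + a * q = 0"
        then have "a * q = (- p) * x" by (simp add: algebra_simps add_eq_0_iff)
        then obtain v where v: "q = v * x" using wr' by blast
        have "(p + a * v) * x = 0" using h v by (simp add: algebra_simps)
        then obtain u where u: "p + a * v = u * y" using Ax by blast
        have "(p, q) = eta_map x y a (u, v)"
          unfolding eta_map_def using u v by (simp add: algebra_simps eq_diff_eq)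
        then show "(p, q) \<in> range (eta_map x y a)" by blast
      next
        assume "(p, q) \<in> range (eta_map x y a)"
        then obtain u v where "(p, q) = eta_map x y a (u, v)" by auto
        then have pq: "p = y * u - a * v" "q = x * v" unfolding eta_map_def by auto
        have "x * p + a * q = (x * y) * u" unfolding pq by (simp add: algebra_simps)
        then show "x * p + a * q = 0" using xy by simp
      qed
    next
      show "ideal_gen {x, a} = {t. \<exists>p q. t = x * p + a * q}"
        unfolding ideal_gen_two by (auto simp: mult.commute)
    qed
  qed
qed

end
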